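(* Let $\lambda\in(0,1)$ be fixed and let $\omega\sim\mathcal G(n,p)$ with $p=\lambda/n$. There exists $c=c(\lambda)>0$ such that for every $\rho>0$ there exists $M_0=M_0(\lambda,\rho)$ such that for every $M\geq M_0$ there is $C=C(\lambda,\rho,M)$ with \[\mathbb P\big(|S_M(\omega)|\geq \rho n\big)\leq C e^{-c\rho n}\quad\text{for all } n.\]
   Context: $\mathcal G(n,p)$ is the Erdős–Rényi random graph on vertex set $\{1,\dots,n\}$. For a graph $\omega$ and vertex $x$, $\mathcal C_x$ denotes the connected component (cluster) of $x$, and $S_M(\omega)=\{x:|\mathcal C_x|>M\}$ is the set of vertices in clusters of size larger than $M$. *)

theory Defs
  imports "HOL-Probability.Probability"
begin

definition all_edges :: "nat \<Rightarrow> nat set set" where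
  "all_edges n = {e. \<exists>i j. i \<in> {1..n} \<and> j \<in> {1..n} \<and> i \<noteq> j \<and> e = {i, j}}"

definition gnp :: "nat \<Rightarrow> real \<Rightarrow> nat set set pmf" where
  "gnp n p = map_pmf (\<lambda>f. {e \<in> all_edges n. f e})
                     (Pi_pmf (all_edges n) False (\<lambda>_. bernoulli_pmf p))"

definition cluster :: "nat \<Rightarrow> nat set set \<Rightarrow> nat \<Rightarrow> nat set" where
  "cluster n E x = {y \<in> {1..n}. (x, y) \<in> {(a, b). {a, b} \<in> E}\<^sup>*}"

definition S_big :: "nat \<Rightarrow> nat \<Rightarrow> nat set set \<Rightarrow> nat set" where
  "S_big n M E = {x \<in> {1..n}. card (cluster n E x) > M}"

end

theory Submission
  imports Defs
begin


definition wt :: "real \<Rightarrow> 'a set \<Rightarrow> 'a set \<Rightarrow> real" where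
  "wt p D E = p ^ card E * (1 - p) ^ card (D - E)"

definition EE :: "real \<Rightarrow> 'a set \<Rightarrow> ('a set \<Rightarrow> real) \<Rightarrow> real" where
  "EE p D h = (\<Sum>E\<in>Pow D. wt p D E * h E)"

lemma wt_prod:
  assumes "finite D" "E \<subseteq> D"
  shows "wt p D E = (\<Prod>e\<in>D. if e \<in> E then p else 1 - p)"
proof -
  have "(\<Prod>e\<in>D. if e \<in> E then p else 1 - p) = (\<Prod>e\<in>D \<inter> E. p) * (\<Prod>e\<in>D - E. 1 - p)"
    using assms by (simp add: prod.If_cases Diff_eq)
  also have "D \<inter> E = E" using assms by auto
  finally show ?thesis by (simp add: wt_def)
qed

lemma gnp_prob:
  assumes p: "0 < p" "p < 1"
  shows "measure_pmf.prob (gnp n p) A = (\<Sum>E\<in>Pow (all_edges n) \<inter> A. wt p (all_edges n) E)"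
proof -
  define D where "D = all_edges n"
  have fD: "finite D" unfolding D_def all_edges_def
    by (rule finite_subset[of _ "Pow {1..n}"]) auto
  define M where "M = Pi_pmf D False (\<lambda>_. bernoulli_pmf p)"
  define F where "F = (\<lambda>f. {e \<in> D. f e})"
  have g: "gnp n p = map_pmf F M" unfolding gnp_def M_def F_def D_def by simp
  have sM: "set_pmf M \<subseteq> {f. \<forall>x. x \<notin> D \<longrightarrow> f x = False}"
    unfolding M_def by (rule set_Pi_pmf_subset[OF fD])
  have inj: "inj_on F (set_pmf M)"
  proof (rule inj_onI)
    fix f g assume "f \<in> set_pmf M" "g \<in> set_pmf M" "F f = F g"
    with sM show "f = g" unfolding F_def by (auto simp: fun_eq_iff set_eq_iff)
  qed
  have pmfM: "pmf M (\<lambda>e. e \<in> E) = wt p D E" if "E \<subseteq> D" for E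
    using that p fD by (simp add: M_def pmf_Pi wt_prod if_distrib cong: if_cong) (auto intro!: prod.cong)
  have inM: "(\<lambda>e. e \<in> E) \<in> set_pmf M" if "E \<subseteq> D" for E
  proof -
    have "wt p D E > 0" using p by (simp add: wt_def)
    then show ?thesis using pmfM[OF that] by (simp add: set_pmf_eq')
  qed
  have pmfG: "pmf (gnp n p) E = wt p D E" if "E \<subseteq> D" for E
  proof -
    have "F (\<lambda>e. e \<in> E) = E" using that unfolding F_def by auto
    then have "pmf (gnp n p) E = pmf (map_pmf F M) (F (\<lambda>e. e \<in> E))" using g by simp
    also have "\<dots> = pmf M (\<lambda>e. e \<in> E)" by (rule pmf_map_inj[OF inj inM[OF that]])
    finally show ?thesis using pmfM[OF that] by simp
  qed
  have sG: "set_pmf (gnp n p) \<subseteq> Pow D" unfolding g F_def by auto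
  have "measure_pmf.prob (gnp n p) A = measure_pmf.prob (gnp n p) (A \<inter> set_pmf (gnp n p))"
    by (simp add: measure_Int_set_pmf)
  also have "\<dots> \<le> measure_pmf.prob (gnp n p) (Pow D \<inter> A)"
    using sG by (intro measure_pmf.finite_measure_mono) auto
  finally have le1: "measure_pmf.prob (gnp n p) A \<le> measure_pmf.prob (gnp n p) (Pow D \<inter> A)" .
  have le2: "measure_pmf.prob (gnp n p) (Pow D \<inter> A) \<le> measure_pmf.prob (gnp n p) A"
    by (intro measure_pmf.finite_measure_mono) auto
  have "measure_pmf.prob (gnp n p) (Pow D \<inter> A) = (\<Sum>E\<in>Pow D \<inter> A. pmf (gnp n p) E)"
    using fD by (intro measure_measure_pmf_finite) auto
  also have "\<dots> = (\<Sum>E\<in>Pow D \<inter> A. wt p D E)" by (intro sum.cong) (auto simp: pmfG)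
  finally show ?thesis using le1 le2 unfolding D_def by linarith
qed


lemma wt_nonneg: "0 \<le> p \<Longrightarrow> p \<le> 1 \<Longrightarrow> 0 \<le> wt p D E"
  by (simp add: wt_def)

lemma binom_wt:
  assumes "finite D"
  shows "(\<Sum>E\<in>Pow D. wt p D E * z ^ card E) = (p * z + (1 - p)) ^ card D"
proof -
  have "(p * z + (1 - p)) ^ card D = (\<Prod>x\<in>D. p * z + (1 - p))" by simp
  also have "\<dots> = (\<Sum>X\<in>Pow D. (\<Prod>x\<in>X. p * z) * (\<Prod>x\<in>D - X. 1 - p))"
    by (rule prod_add[OF assms])
  also have "\<dots> = (\<Sum>E\<in>Pow D. wt p D E * z ^ card E)"
    by (intro sum.cong) (auto simp: wt_def power_mult_distrib)
  finally show ?thesis by simp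
qed

lemma sum_wt: "finite D \<Longrightarrow> (\<Sum>E\<in>Pow D. wt p D E) = 1"
  using binom_wt[of D p 1] by simp

lemma pow_split:
  assumes "finite D1" "finite D2" "D1 \<inter> D2 = {}"
  shows "(\<Sum>E\<in>Pow (D1 \<union> D2). f E) = (\<Sum>E1\<in>Pow D1. \<Sum>E2\<in>Pow D2. f (E1 \<union> E2))"
proof -
  have bij: "bij_betw (\<lambda>(E1, E2). E1 \<union> E2) (Pow D1 \<times> Pow D2) (Pow (D1 \<union> D2))"
  proof (rule bij_betwI[where g = "\<lambda>E. (E \<inter> D1, E \<inter> D2)"])
    show "(\<lambda>(E1, E2). E1 \<union> E2) \<in> Pow D1 \<times> Pow D2 \<rightarrow> Pow (D1 \<union> D2)" by auto
    show "(\<lambda>E. (E \<inter> D1, E \<inter> D2)) \<in> Pow (D1 \<union> D2) \<rightarrow> Pow D1 \<times> Pow D2" by auto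
    show "(\<lambda>E. (E \<inter> D1, E \<inter> D2)) (case x of (E1, E2) \<Rightarrow> E1 \<union> E2) = x"
      if "x \<in> Pow D1 \<times> Pow D2" for x using that assms(3) by auto
    show "(case (y \<inter> D1, y \<inter> D2) of (E1, E2) \<Rightarrow> E1 \<union> E2) = y" if "y \<in> Pow (D1 \<union> D2)" for y
      using that by auto
  qed
  have "(\<Sum>E\<in>Pow (D1 \<union> D2). f E) = (\<Sum>x\<in>Pow D1 \<times> Pow D2. f (case x of (E1, E2) \<Rightarrow> E1 \<union> E2))"
    using sum.reindex_bij_betw[OF bij, of f] by simp
  also have "\<dots> = (\<Sum>E1\<in>Pow D1. \<Sum>E2\<in>Pow D2. f (E1 \<union> E2))"
    by (simp add: sum.cartesian_product split_def)
  finally show ?thesis .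
qed

lemma wt_split:
  assumes "finite D1" "finite D2" "D1 \<inter> D2 = {}" "E1 \<subseteq> D1" "E2 \<subseteq> D2"
  shows "wt p (D1 \<union> D2) (E1 \<union> E2) = wt p D1 E1 * wt p D2 E2"
proof -
  have f: "finite E1" "finite E2" using assms(1,2,4,5) finite_subset by blast+
  have c1: "card (E1 \<union> E2) = card E1 + card E2"
    using assms f by (intro card_Un_disjoint) auto
  have e: "(D1 \<union> D2) - (E1 \<union> E2) = (D1 - E1) \<union> (D2 - E2)" using assms by auto
  have c2: "card ((D1 - E1) \<union> (D2 - E2)) = card (D1 - E1) + card (D2 - E2)"
    using assms by (intro card_Un_disjoint) auto
  show ?thesis unfolding wt_def c1 e c2 by (simp add: power_add)
qed

lemma EE_split:
  assumes "finite D1" "finite D2" "D1 \<inter> D2 = {}"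
  shows "EE p (D1 \<union> D2) h = (\<Sum>E1\<in>Pow D1. wt p D1 E1 * (\<Sum>E2\<in>Pow D2. wt p D2 E2 * h (E1 \<union> E2)))"
  unfolding EE_def
  by (subst pow_split[OF assms]) (auto intro!: sum.cong simp: wt_split[OF assms] sum_distrib_left mult.assoc)


definition pairs :: "nat set \<Rightarrow> nat set set" where
  "pairs W = {e. \<exists>a b. a \<in> W \<and> b \<in> W \<and> a \<noteq> b \<and> e = {a, b}}"

lemma all_edges_pairs: "all_edges n = pairs {1..n}"
  unfolding all_edges_def pairs_def by auto

lemma finite_pairs: "finite W \<Longrightarrow> finite (pairs W)"
  unfolding pairs_def by (rule finite_subset[of _ "Pow W"]) auto

type_synonym state = "nat set \<times> nat set"

definition wsel :: "state \<Rightarrow> nat" where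
  "wsel s = (if fst s = {} then Min (snd s) else Min (fst s))"
definition qset :: "state \<Rightarrow> nat set" where
  "qset s = snd s - {wsel s}"
definition chs :: "nat set set \<Rightarrow> state \<Rightarrow> nat set" where
  "chs E s = {u \<in> qset s. {wsel s, u} \<in> E}"
definition nx :: "nat set set \<Rightarrow> state \<Rightarrow> state" where
  "nx E s = ((fst s \<union> chs E s) - {wsel s}, qset s - chs E s)"
primrec st :: "nat set set \<Rightarrow> state \<Rightarrow> nat \<Rightarrow> state" where
  "st E s 0 = s"
| "st E s (Suc i) = nx E (st E s i)"
definition XX :: "nat set set \<Rightarrow> state \<Rightarrow> nat \<Rightarrow> nat" where
  "XX E s i = card (chs E (st E s i))"
definition vs :: "state \<Rightarrow> nat set" where
  "vs s = fst s \<union> snd s"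
definition good :: "state \<Rightarrow> bool" where
  "good s \<longleftrightarrow> finite (fst s) \<and> finite (snd s) \<and> fst s \<inter> snd s = {}"

lemma chs_sub: "chs E s \<subseteq> qset s" unfolding chs_def by auto

lemma vs_nxt: "vs (nx E s) = vs s - {wsel s}"
  using chs_sub[of E s] unfolding vs_def nx_def qset_def by auto

lemma good_nxt: "good s \<Longrightarrow> good (nx E s)"
  using chs_sub[of E s] unfolding good_def nx_def qset_def
  by (auto intro: finite_subset)

lemma good_st: "good s \<Longrightarrow> good (st E s i)"
  by (induction i) (auto intro: good_nxt)

lemma wsel_in: "good s \<Longrightarrow> vs s \<noteq> {} \<Longrightarrow> wsel s \<in> vs s"
  unfolding good_def vs_def wsel_def by (auto intro: Min_in)

lemma wsel_in_snd: "good s \<Longrightarrow> snd s \<noteq> {} \<Longrightarrow> wsel s \<in> vs s"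
  using wsel_in[of s] unfolding vs_def by auto

lemma vs_st_sub: "vs (st E s i) \<subseteq> vs s"
  by (induction i) (auto simp: vs_nxt)

lemma st_shift: "st E s (Suc i) = st E (nx E s) i"
  by (induction i) auto

lemma finite_vs: "good s \<Longrightarrow> finite (vs s)" unfolding good_def vs_def by auto

lemma card_vs_st: "good s \<Longrightarrow> card (vs (st E s i)) = card (vs s) - i"
proof (induction i)
  case (Suc i)
  have g: "good (st E s i)" using good_st[OF Suc.prems] .
  show ?case
  proof (cases "vs (st E s i) = {}")
    case True
    then have "vs (st E s (Suc i)) = {}" by (simp add: vs_nxt)
    then show ?thesis using True Suc by simp
  next
    case False
    have "card (vs (st E s (Suc i))) = card (vs (st E s i)) - 1"
      using wsel_in[OF g False] finite_vs[OF g] by (simp add: vs_nxt)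
    then show ?thesis using Suc by simp
  qed
qed simp

lemma chs_local:
  assumes "good t" "vs t \<subseteq> V"
  shows "chs E t = chs (E \<inter> pairs V) t"
proof (cases "snd t = {}")
  case True then show ?thesis by (simp add: chs_def qset_def)
next
  case False
  have w: "wsel t \<in> V" using wsel_in_snd[OF assms(1) False] assms(2) by auto
  have "{wsel t, u} \<in> pairs V" if "u \<in> qset t" for u
    using that w assms(2) unfolding pairs_def qset_def vs_def by blast
  then show ?thesis unfolding chs_def by blast
qed

lemma nx_local:
  assumes "good t" "vs t \<subseteq> V"
  shows "nx E t = nx (E \<inter> pairs V) t"
  using chs_local[OF assms] unfolding nx_def by simp

lemma st_local:
  assumes "good s" "vs s \<subseteq> V"
  shows "st E s i = st (E \<inter> pairs V) s i"
proof (induction i)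
  case (Suc i)
  have "good (st E s i)" by (rule good_st[OF assms(1)])
  moreover have "vs (st E s i) \<subseteq> V" using vs_st_sub assms(2) by blast
  ultimately have "nx E (st E s i) = nx (E \<inter> pairs V) (st E s i)" by (rule nx_local)
  then show ?case using Suc by simp
qed simp

lemma XX_local:
  assumes "good s" "vs s \<subseteq> V"
  shows "XX E s i = XX (E \<inter> pairs V) s i"
proof -
  have "good (st E s i)" by (rule good_st[OF assms(1)])
  moreover have "vs (st E s i) \<subseteq> V" using vs_st_sub assms(2) by blast
  ultimately have "chs E (st E s i) = chs (E \<inter> pairs V) (st E s i)" by (rule chs_local)
  then show ?thesis unfolding XX_def using st_local[OF assms, of E i] by simp
qed


lemma EE_mono:
  assumes "0 \<le> p" "p \<le> 1" "\<And>E. E \<subseteq> D \<Longrightarrow> h E \<le> h' E"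
  shows "EE p D h \<le> EE p D h'"
  unfolding EE_def using assms wt_nonneg[OF assms(1,2)]
  by (intro sum_mono mult_left_mono) auto

lemma core:
  assumes "good s" "card (vs s) \<le> n" "\<forall>i. 1 \<le> g i" "0 \<le> p" "p \<le> 1"
  shows "EE p (pairs (vs s)) (\<lambda>E. \<Prod>i<k. g i ^ XX E s i) \<le> (\<Prod>i<k. (1 - p + p * g i) ^ n)"
  using assms
proof (induction k arbitrary: s g)
  case 0
  then show ?case using sum_wt[OF finite_pairs[OF finite_vs[OF 0(1)]]] by (simp add: EE_def)
next
  case (Suc k)
  note gs = Suc.prems(1)
  have fW: "finite (vs s)" by (rule finite_vs[OF gs])
  have Bge: "1 \<le> (\<Prod>i<k'. (1 - p + p * g' i) ^ n)" if "\<forall>i. 1 \<le> g' i" for k' g'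
  proof -
    have "1 \<le> 1 - p + p * g' i" for i
    proof -
      have "p * 1 \<le> p * g' i" using that Suc.prems(4) by (intro mult_left_mono) auto
      then show ?thesis by simp
    qed
    then show ?thesis by (intro prod_ge_1 one_le_power) auto
  qed
  show ?case
  proof (cases "vs s = {}")
    case True
    have "XX E s i = 0" for E i
    proof -
      have "vs (st E s i) = {}" using vs_st_sub[of E s i] True by auto
      then have "qset (st E s i) = {}" by (simp add: vs_def qset_def)
      then show ?thesis by (simp add: XX_def chs_def)
    qed
    then have "EE p (pairs (vs s)) (\<lambda>E. \<Prod>i<Suc k. g i ^ XX E s i) = 1"
      using sum_wt[OF finite_pairs[OF fW]] by (simp add: EE_def)
    then show ?thesis using Bge[OF Suc.prems(3), of "Suc k"] by linarith
  next
    case False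
    define W where "W = vs s"
    define w where "w = wsel s"
    have wW: "w \<in> W" unfolding w_def W_def by (rule wsel_in[OF gs False])
    define D1 where "D1 = (\<lambda>u. {w, u}) ` (W - {w})"
    define D2 where "D2 = pairs (W - {w})"
    have fD1: "finite D1" unfolding D1_def W_def using fW by simp
    have fD2: "finite D2" unfolding D2_def W_def using fW by (simp add: finite_pairs)
    have disj: "D1 \<inter> D2 = {}" unfolding D1_def D2_def pairs_def by auto
    have pW: "pairs W = D1 \<union> D2"
    proof
      show "pairs W \<subseteq> D1 \<union> D2"
      proof
        fix e assume "e \<in> pairs W"
        then obtain a b where ab: "a \<in> W" "b \<in> W" "a \<noteq> b" "e = {a, b}" unfolding pairs_def by blast
        show "e \<in> D1 \<union> D2"
        proof (cases "a = w \<or> b = w")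
          case True
          then show ?thesis using ab unfolding D1_def by (auto simp: insert_commute)
        next
          case False
          then show ?thesis using ab unfolding D2_def pairs_def by auto
        qed
      qed
      show "D1 \<union> D2 \<subseteq> pairs W" using wW unfolding D1_def D2_def pairs_def by auto
    qed
    define s1 where "s1 = (\<lambda>E1. nx E1 s)"
    have gs1: "good (s1 E1)" for E1 unfolding s1_def by (rule good_nxt[OF gs])
    have vs1: "vs (s1 E1) = W - {w}" for E1 unfolding s1_def W_def w_def by (simp add: vs_nxt)
    have cardvs1: "card (vs (s1 E1)) \<le> n" for E1
      using vs1 Suc.prems(2) fW unfolding W_def by (metis card_Diff1_le dual_order.trans)
    define B where "B = (\<Prod>i<k. (1 - p + p * g (Suc i)) ^ n)"
    have IH: "EE p D2 (\<lambda>E. \<Prod>i<k. g (Suc i) ^ XX E (s1 E1) i) \<le> B" for E1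
      using Suc.IH[OF gs1 cardvs1, of "\<lambda>i. g (Suc i)"] Suc.prems(3-5) vs1
      unfolding B_def D2_def by simp
    have key: "(\<Prod>i<Suc k. g i ^ XX (E1 \<union> E2) s i)
          = g 0 ^ card (chs E1 s) * (\<Prod>i<k. g (Suc i) ^ XX E2 (s1 E1) i)"
      if E1: "E1 \<subseteq> D1" and E2: "E2 \<subseteq> D2" for E1 E2
    proof -
      have c: "chs (E1 \<union> E2) s = chs E1 s"
      proof -
        have "{w, u} \<notin> E2" for u using E2 unfolding D2_def pairs_def by auto
        then show ?thesis unfolding chs_def w_def by auto
      qed
      have nx: "nx (E1 \<union> E2) s = s1 E1" unfolding s1_def nx_def using c by simp
      have int: "(E1 \<union> E2) \<inter> pairs (vs (s1 E1)) = E2"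
        using E1 E2 disj unfolding vs1 D2_def by blast
      have x: "XX (E1 \<union> E2) s (Suc i) = XX E2 (s1 E1) i" for i
      proof -
        have "XX (E1 \<union> E2) s (Suc i) = XX (E1 \<union> E2) (s1 E1) i"
          unfolding XX_def st_shift nx by simp
        also have "\<dots> = XX ((E1 \<union> E2) \<inter> pairs (vs (s1 E1))) (s1 E1) i"
          by (rule XX_local[OF gs1]) simp
        finally show ?thesis using int by simp
      qed
      show ?thesis unfolding prod.lessThan_Suc_shift x by (simp add: XX_def c)
    qed
    have "EE p (pairs (vs s)) (\<lambda>E. \<Prod>i<Suc k. g i ^ XX E s i)
        = (\<Sum>E1\<in>Pow D1. wt p D1 E1 * (\<Sum>E2\<in>Pow D2. wt p D2 E2 *
              (g 0 ^ card (chs E1 s) * (\<Prod>i<k. g (Suc i) ^ XX E2 (s1 E1) i))))"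
      unfolding W_def[symmetric] pW EE_split[OF fD1 fD2 disj]
      by (intro sum.cong refl arg_cong2[where f = "(*)"] sum.cong) (simp_all add: key del: prod.lessThan_Suc)
    also have "\<dots> = (\<Sum>E1\<in>Pow D1. wt p D1 E1 * g 0 ^ card (chs E1 s) *
              EE p D2 (\<lambda>E. \<Prod>i<k. g (Suc i) ^ XX E (s1 E1) i))"
      unfolding EE_def by (intro sum.cong refl) (simp add: sum_distrib_left mult_ac)
    also have "\<dots> \<le> (\<Sum>E1\<in>Pow D1. wt p D1 E1 * g 0 ^ card E1 * B)"
    proof (rule sum_mono, rule mult_mono)
      fix E1 assume E1: "E1 \<in> Pow D1"
      have "card (chs E1 s) \<le> card E1"
      proof -
        have "(\<lambda>u. {w, u}) ` chs E1 s \<subseteq> E1" unfolding chs_def w_def by auto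
        moreover have "inj_on (\<lambda>u. {w, u}) (chs E1 s)" by (auto intro!: inj_onI simp: doubleton_eq_iff)
        moreover have "finite E1" using E1 fD1 finite_subset by auto
        ultimately show ?thesis by (metis card_image card_mono)
      qed
      moreover have "1 \<le> g 0" using Suc.prems(3) by auto
      ultimately have "g 0 ^ card (chs E1 s) \<le> g 0 ^ card E1" by (rule power_increasing)
      then show "wt p D1 E1 * g 0 ^ card (chs E1 s) \<le> wt p D1 E1 * g 0 ^ card E1"
        using wt_nonneg[OF Suc.prems(4,5)] by (intro mult_left_mono) auto
      show "EE p D2 (\<lambda>E. \<Prod>i<k. g (Suc i) ^ XX E (s1 E1) i) \<le> B" by (rule IH)
      show "0 \<le> wt p D1 E1 * g 0 ^ card E1" using wt_nonneg[OF Suc.prems(4,5)] Suc.prems(3)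
        by (metis dual_order.trans mult_nonneg_nonneg zero_le_one zero_le_power)
      show "0 \<le> EE p D2 (\<lambda>E. \<Prod>i<k. g (Suc i) ^ XX E (s1 E1) i)"
        unfolding EE_def using wt_nonneg[OF Suc.prems(4,5)] Suc.prems(3)
        by (intro sum_nonneg mult_nonneg_nonneg prod_nonneg zero_le_power) (auto intro: order_trans[OF zero_le_one])
    qed
    also have "\<dots> = (p * g 0 + (1 - p)) ^ card D1 * B"
      using binom_wt[OF fD1, of p "g 0"] by (simp add: sum_distrib_right[symmetric])
    also have "\<dots> \<le> (1 - p + p * g 0) ^ n * B"
    proof -
      have cD: "card D1 \<le> n" unfolding D1_def using Suc.prems(2) fW unfolding W_def
        by (meson card_Diff1_le card_image_le finite_Diff order_trans)
      have "p * 1 \<le> p * g 0" using Suc.prems(3,4) by (intro mult_left_mono) auto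
      then have b1: "1 \<le> 1 - p + p * g 0" by simp
      have "1 \<le> B" using Bge[of "\<lambda>i. g (Suc i)" k] Suc.prems(3) unfolding B_def by auto
      then have B0: "0 \<le> B" by simp
      have "(1 - p + p * g 0) ^ card D1 \<le> (1 - p + p * g 0) ^ n" by (rule power_increasing[OF cD b1])
      then show ?thesis using B0 by (simp add: add.commute mult_right_mono)
    qed
    also have "\<dots> = (\<Prod>i<Suc k. (1 - p + p * g i) ^ n)"
      unfolding B_def prod.lessThan_Suc_shift by simp
    finally show ?thesis .
  qed
qed


definition s0 :: "nat \<Rightarrow> state" where "s0 n = ({}, {1..n})"

locale expl =
  fixes n :: nat and E :: "nat set set"
  assumes Esub: "E \<subseteq> all_edges n"
begin

definition AA where "AA i = fst (st E (s0 n) i)"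
definition UU where "UU i = snd (st E (s0 n) i)"
definition VV where "VV i = vs (st E (s0 n) i)"
definition ww where "ww i = wsel (st E (s0 n) i)"
definition X where "X i = XX E (s0 n) i"

lemma good_s0: "good (s0 n)" by (simp add: good_def s0_def)

lemma good_i: "good (st E (s0 n) i)" by (rule good_st[OF good_s0])

lemma VV0: "VV 0 = {1..n}" by (simp add: VV_def vs_def s0_def)

lemma card_VV: "card (VV i) = n - i"
  using card_vs_st[OF good_s0, of E i] by (simp add: VV_def vs_def s0_def)

lemma finite_VV: "finite (VV i)" unfolding VV_def by (rule finite_vs[OF good_i])

lemma VV_Suc: "VV (Suc i) = VV i - {ww i}"
  by (simp add: VV_def ww_def vs_nxt)

lemma ww_in: "i < n \<Longrightarrow> ww i \<in> VV i"
proof -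
  assume "i < n"
  then have "VV i \<noteq> {}" using card_VV[of i] by auto
  then show ?thesis unfolding ww_def VV_def by (rule wsel_in[OF good_i])
qed

lemma VV_mono: "i \<le> j \<Longrightarrow> VV j \<subseteq> VV i"
proof (induction j)
  case (Suc j)
  then show ?case by (cases "i = Suc j") (auto simp: VV_Suc)
qed simp

lemma VV_sub: "VV i \<subseteq> {1..n}" using VV_mono[of 0 i] VV0 by simp

lemma ww_notin: "i < j \<Longrightarrow> ww i \<notin> VV j"
  using VV_mono[of "Suc i" j] VV_Suc[of i] by auto

lemma VV_n: "VV n = {}" using card_VV[of n] finite_VV[of n] by simp

lemma ww_surj: "x \<notin> VV j \<Longrightarrow> x \<in> {1..n} \<Longrightarrow> \<exists>i<j. x = ww i"
proof (induction j)
  case 0 then show ?case using VV0 by simp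
next
  case (Suc j)
  show ?case
  proof (cases "x \<in> VV j")
    case True
    then have "x = ww j" using Suc.prems VV_Suc[of j] by auto
    then show ?thesis by auto
  next
    case False
    then show ?thesis using Suc by (meson less_Suc_eq)
  qed
qed

lemma ww_surj': "x \<in> {1..n} \<Longrightarrow> \<exists>i<n. x = ww i"
  using ww_surj VV_n by blast

lemma AA_sub: "AA i \<subseteq> VV i" unfolding AA_def VV_def vs_def by auto
lemma UU_sub: "UU i \<subseteq> VV i" unfolding UU_def VV_def vs_def by auto
lemma AA_n: "AA n = {}" using AA_sub[of n] VV_n by auto
lemma AA0: "AA 0 = {}" by (simp add: AA_def s0_def)
lemma VV_AU: "VV i = AA i \<union> UU i" unfolding AA_def UU_def VV_def vs_def by simp

lemma UU_Suc_sub: "UU (Suc i) \<subseteq> UU i"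
  unfolding UU_def by (auto simp: nx_def qset_def)

lemma inv_I: "y \<in> {1..n} - VV i \<Longrightarrow> {y, u} \<in> E \<Longrightarrow> u \<notin> UU i"
proof (induction i arbitrary: y)
  case 0 then show ?case using VV0 by simp
next
  case (Suc i)
  show ?case
  proof (cases "y \<in> VV i")
    case False
    then show ?thesis using Suc.IH[of y] Suc.prems UU_Suc_sub[of i] by auto
  next
    case True
    then have y: "y = ww i" using Suc.prems(1) VV_Suc[of i] by auto
    show ?thesis
      using Suc.prems(2) unfolding y UU_def ww_def by (auto simp: nx_def chs_def)
  qed
qed

lemma potential:
  "card (AA (Suc i)) + (if AA i = {} then 0 else 1) = card (AA i) + X i"
proof -
  define t where "t = st E (s0 n) i"
  have g: "good t" unfolding t_def by (rule good_i)
  have fA: "finite (fst t)" using g by (simp add: good_def)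
  have fU: "finite (snd t)" using g by (simp add: good_def)
  have ch: "chs E t \<subseteq> snd t - {wsel t}" using chs_sub[of E t] by (simp add: qset_def)
  have fch: "finite (chs E t)" using ch fU finite_subset by auto
  have dis: "fst t \<inter> chs E t = {}" using ch g by (auto simp: good_def)
  have A': "AA (Suc i) = (fst t \<union> chs E t) - {wsel t}" by (simp add: AA_def t_def nx_def)
  have Xi: "X i = card (chs E t)" by (simp add: X_def XX_def t_def)
  have Ai: "AA i = fst t" by (simp add: AA_def t_def)
  show ?thesis
  proof (cases "fst t = {}")
    case True
    have "AA (Suc i) = chs E t" using A' True ch by auto
    then show ?thesis using True Ai Xi by simp
  next
    case False
    have w: "wsel t \<in> fst t" using False fA by (simp add: wsel_def)
    have "card (AA (Suc i)) = card (fst t \<union> chs E t) - 1"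
      using w fA fch by (simp add: A' card_Diff_singleton)
    moreover have "card (fst t \<union> chs E t) = card (fst t) + card (chs E t)"
      using fA fch dis by (rule card_Un_disjoint)
    moreover have "card (fst t) \<ge> 1" using False fA by (simp add: Suc_leI card_gt_0_iff)
    ultimately show ?thesis using False Ai Xi by simp
  qed
qed

definition aa where "aa j = Max {i. i \<le> j \<and> AA i = {}}"
definition bb where "bb j = Min {i. j < i \<and> i \<le> n \<and> AA i = {}}"

lemma aa_props: "aa j \<le> j" "AA (aa j) = {}" "aa j < i \<Longrightarrow> i \<le> j \<Longrightarrow> AA i \<noteq> {}"
proof -
  have f: "finite {i. i \<le> j \<and> AA i = {}}" by simp
  have ne: "0 \<in> {i. i \<le> j \<and> AA i = {}}" using AA0 by simp
  have m: "aa j \<in> {i. i \<le> j \<and> AA i = {}}" unfolding aa_def using f ne by (intro Max_in) auto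
  then show "aa j \<le> j" "AA (aa j) = {}" by auto
  show "AA i \<noteq> {}" if "aa j < i" "i \<le> j"
  proof
    assume "AA i = {}"
    then have "i \<le> aa j" unfolding aa_def using that(2) by (intro Max_ge[OF f]) simp
    then show False using that(1) by simp
  qed
qed

lemma bb_props:
  assumes "j < n"
  shows "j < bb j" "bb j \<le> n" "AA (bb j) = {}" "j < i \<Longrightarrow> i < bb j \<Longrightarrow> AA i \<noteq> {}"
proof -
  have f: "finite {i. j < i \<and> i \<le> n \<and> AA i = {}}" by simp
  have ne: "n \<in> {i. j < i \<and> i \<le> n \<and> AA i = {}}" using AA_n assms by simp
  have m: "bb j \<in> {i. j < i \<and> i \<le> n \<and> AA i = {}}" unfolding bb_def using f ne by (intro Min_in) auto
  then show "j < bb j" "bb j \<le> n" "AA (bb j) = {}" by auto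
  show "AA i \<noteq> {}" if "j < i" "i < bb j"
  proof
    assume "AA i = {}"
    then have "bb j \<le> i" unfolding bb_def using that assms m by (intro Min_le[OF f]) simp
    then show False using that(2) by simp
  qed
qed

lemma aa_eq:
  assumes "t \<le> j" "AA t = {}" "\<And>i. t < i \<Longrightarrow> i \<le> j \<Longrightarrow> AA i \<noteq> {}"
  shows "aa j = t"
  unfolding aa_def
proof (rule Max_eqI)
  show "finite {i. i \<le> j \<and> AA i = {}}" by simp
  show "t \<in> {i. i \<le> j \<and> AA i = {}}" using assms by simp
  fix y assume "y \<in> {i. i \<le> j \<and> AA i = {}}"
  then have "y \<le> j" "AA y = {}" by auto
  then show "y \<le> t" using assms(3)[of y] by (cases "t < y") auto
qed

lemma bb_eq:
  assumes "j < t" "t \<le> n" "AA t = {}" "\<And>i. j < i \<Longrightarrow> i < t \<Longrightarrow> AA i \<noteq> {}"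
  shows "bb j = t"
  unfolding bb_def
proof (rule Min_eqI)
  show "finite {i. j < i \<and> i \<le> n \<and> AA i = {}}" by simp
  show "t \<in> {i. j < i \<and> i \<le> n \<and> AA i = {}}" using assms by simp
  fix y assume "y \<in> {i. j < i \<and> i \<le> n \<and> AA i = {}}"
  then have "j < y" "AA y = {}" by auto
  then show "t \<le> y" using assms(4)[of y] by (cases "y < t") auto
qed

lemma closure:
  assumes j: "j < n" and y: "y \<in> VV (aa j) - VV (bb j)" and e: "{y, u} \<in> E"
  shows "u \<in> VV (aa j) - VV (bb j)"
proof -
  have yn: "y \<in> {1..n}" using y VV_sub[of "aa j"] by blast
  have un: "u \<in> {1..n}" using e Esub unfolding all_edges_def by (auto simp: doubleton_eq_iff)
  have "u \<notin> UU (bb j)" using inv_I[of y "bb j" u] yn y e by auto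
  then have ub: "u \<notin> VV (bb j)" using VV_AU[of "bb j"] bb_props(3)[OF j] by auto
  have "u \<in> VV (aa j)"
  proof (rule ccontr)
    assume "u \<notin> VV (aa j)"
    then have "y \<notin> UU (aa j)" using inv_I[of u "aa j" y] un e by (auto simp: insert_commute)
    then have "y \<notin> VV (aa j)" using VV_AU[of "aa j"] aa_props(2)[of j] by auto
    then show False using y by auto
  qed
  then show ?thesis using ub by auto
qed

lemma cluster_sub:
  assumes j: "j < n" and x: "x \<in> VV (aa j) - VV (bb j)"
  shows "cluster n E x \<subseteq> VV (aa j) - VV (bb j)"
proof
  fix y assume "y \<in> cluster n E x"
  then have "(x, y) \<in> {(a, b). {a, b} \<in> E}\<^sup>*" unfolding cluster_def by auto
  then show "y \<in> VV (aa j) - VV (bb j)"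
  proof (induction rule: rtrancl_induct)
    case base then show ?case using x .
  next
    case (step y z)
    then show ?case using closure[OF j, of y z] by auto
  qed
qed

lemma ww_in_K: "j < n \<Longrightarrow> ww j \<in> VV (aa j) - VV (bb j)"
  using ww_in[of j] VV_mono[OF aa_props(1)[of j]] ww_notin[OF bb_props(1)] by auto

lemma card_K: "j < n \<Longrightarrow> card (VV (aa j) - VV (bb j)) = bb j - aa j"
proof -
  assume j: "j < n"
  have "aa j \<le> bb j" using aa_props(1)[of j] bb_props(1)[OF j] by simp
  then have "VV (bb j) \<subseteq> VV (aa j)" by (rule VV_mono)
  then have "card (VV (aa j) - VV (bb j)) = card (VV (aa j)) - card (VV (bb j))"
    using finite_VV by (simp add: card_Diff_subset finite_subset)
  then show ?thesis using card_VV bb_props(2)[OF j] by simp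
qed

definition SS where "SS M = {j. j < n \<and> M < bb j - aa j}"

lemma S_big_sub: "S_big n M E \<subseteq> ww ` SS M"
proof
  fix x assume x: "x \<in> S_big n M E"
  then have xn: "x \<in> {1..n}" and cx: "M < card (cluster n E x)" unfolding S_big_def by auto
  obtain j where j: "j < n" "x = ww j" using ww_surj'[OF xn] by blast
  have "cluster n E x \<subseteq> VV (aa j) - VV (bb j)" using cluster_sub[OF j(1)] ww_in_K[OF j(1)] j(2) by simp
  then have "card (cluster n E x) \<le> bb j - aa j"
    using card_K[OF j(1)] finite_VV by (metis card_mono finite_Diff)
  then have "j \<in> SS M" using cx j(1) unfolding SS_def by simp
  then show "x \<in> ww ` SS M" using j(2) by simp
qed

lemma card_S_big: "card (S_big n M E) \<le> card (SS M)"
proof -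
  have "finite (SS M)" unfolding SS_def by simp
  then show ?thesis using S_big_sub[of M] by (meson card_image_le card_mono finite_imageI order_trans)
qed

lemma same_side:
  assumes "0 < i" "i < n" "AA i \<noteq> {}"
  shows "aa i = aa (i - 1)" "bb i = bb (i - 1)"
proof -
  show "aa i = aa (i - 1)"
  proof (rule aa_eq)
    show "aa (i - 1) \<le> i" using aa_props(1)[of "i - 1"] by simp
    show "AA (aa (i - 1)) = {}" by (rule aa_props(2))
    fix k assume k: "aa (i - 1) < k" "k \<le> i"
    show "AA k \<noteq> {}"
    proof (cases "k = i")
      case True then show ?thesis using assms(3) by simp
    next
      case False then show ?thesis using aa_props(3)[of "i - 1" k] k by simp
    qed
  qed
  have j: "i - 1 < n" using assms by simp
  have "bb (i - 1) \<noteq> i" using bb_props(3)[OF j] assms(3) by auto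
  then have bi: "i < bb (i - 1)" using bb_props(1)[OF j] assms(1) by simp
  show "bb i = bb (i - 1)"
  proof (rule bb_eq[OF bi bb_props(2)[OF j] bb_props(3)[OF j]])
    fix k assume "i < k" "k < bb (i - 1)"
    then show "AA k \<noteq> {}" using bb_props(4)[OF j, of k] by simp
  qed
qed

lemma SS_step: "0 < i \<Longrightarrow> i < n \<Longrightarrow> AA i \<noteq> {} \<Longrightarrow> (i - 1 \<in> SS M \<longleftrightarrow> i \<in> SS M)"
  using same_side[of i] unfolding SS_def by auto

lemma tele:
  fixes c \<Phi> :: "nat \<Rightarrow> real"
  assumes "\<Phi> 0 = 0" "\<And>i. 0 < i \<Longrightarrow> i < m \<Longrightarrow> \<Phi> i \<noteq> 0 \<Longrightarrow> c (i - 1) = c i" "0 < m"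
  shows "(\<Sum>j<m. c j * (\<Phi> (Suc j) - \<Phi> j)) = c (m - 1) * \<Phi> m"
  using assms(2,3)
proof (induction m)
  case 0 then show ?case by simp
next
  case (Suc m)
  show ?case
  proof (cases "m = 0")
    case True then show ?thesis using assms(1) by simp
  next
    case False
    have IH: "(\<Sum>j<m. c j * (\<Phi> (Suc j) - \<Phi> j)) = c (m - 1) * \<Phi> m"
      using Suc.IH Suc.prems False by simp
    have "c (m - 1) * \<Phi> m = c m * \<Phi> m"
      using Suc.prems(1)[of m] False by (cases "\<Phi> m = 0") auto
    then show ?thesis using IH by (simp add: algebra_simps)
  qed
qed

lemma sum_X: "0 < n \<Longrightarrow> (\<Sum>j\<in>SS M. real (X j)) = real (card (SS M)) - real (card (SS M \<inter> {i. AA i = {}}))"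
proof -
  assume n: "0 < n"
  define S where "S = SS M"
  have Sn: "S \<subseteq> {..<n}" unfolding S_def SS_def by auto
  have fS: "finite S" using Sn finite_subset by blast
  define c :: "nat \<Rightarrow> real" where "c j = (if j \<in> S then 1 else 0)" for j
  define \<Phi> :: "nat \<Rightarrow> real" where "\<Phi> i = real (card (AA i))" for i
  have Xj: "real (X j) = (\<Phi> (Suc j) - \<Phi> j) + (if AA j = {} then 0 else 1)" for j
  proof (cases "AA j = {}")
    case True then show ?thesis using potential[of j] unfolding \<Phi>_def by simp
  next
    case False
    have "card (AA (Suc j)) + 1 = card (AA j) + X j"
      using potential[of j] False by simp
    then have "real (card (AA (Suc j)) + 1) = real (card (AA j) + X j)" by (simp only:)
    then have "real (card (AA (Suc j))) + 1 = real (card (AA j)) + real (X j)" by simp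
    then show ?thesis using False unfolding \<Phi>_def by simp
  qed
  have t: "(\<Sum>j<n. c j * (\<Phi> (Suc j) - \<Phi> j)) = c (n - 1) * \<Phi> n"
  proof (rule tele[OF _ _ n])
    show "\<Phi> 0 = 0" using AA0 by (simp add: \<Phi>_def)
    fix i assume "0 < i" "i < n" "\<Phi> i \<noteq> 0"
    then have "AA i \<noteq> {}" unfolding \<Phi>_def by auto
    then show "c (i - 1) = c i" using SS_step[of i M] \<open>0 < i\<close> \<open>i < n\<close> unfolding c_def S_def by simp
  qed
  have "\<Phi> n = 0" using AA_n by (simp add: \<Phi>_def)
  then have t0: "(\<Sum>j<n. c j * (\<Phi> (Suc j) - \<Phi> j)) = 0" using t by simp
  have "(\<Sum>j<n. c j * (\<Phi> (Suc j) - \<Phi> j)) = (\<Sum>j<n. if j \<in> S then \<Phi> (Suc j) - \<Phi> j else 0)"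
    by (intro sum.cong) (auto simp: c_def)
  also have "\<dots> = (\<Sum>j\<in>{..<n} \<inter> S. \<Phi> (Suc j) - \<Phi> j)"
    by (simp add: sum.inter_restrict)
  also have "{..<n} \<inter> S = S" using Sn by auto
  finally have "(\<Sum>j<n. c j * (\<Phi> (Suc j) - \<Phi> j)) = (\<Sum>j\<in>S. \<Phi> (Suc j) - \<Phi> j)" .
  then have s0: "(\<Sum>j\<in>S. \<Phi> (Suc j) - \<Phi> j) = 0" using t0 by simp
  have "(\<Sum>j\<in>S. real (X j)) = (\<Sum>j\<in>S. \<Phi> (Suc j) - \<Phi> j) + (\<Sum>j\<in>S. (if AA j = {} then 0 else 1))"
    unfolding Xj by (simp add: sum.distrib)
  also have "(\<Sum>j\<in>S. (if AA j = {} then 0 else 1::real)) = real (card (S - {i. AA i = {}}))"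
    using fS by (simp add: sum.If_cases Diff_eq)
  also have "card (S - {i. AA i = {}}) = card S - card (S \<inter> {i. AA i = {}})"
    using fS by (intro card_Diff_subset_Int) auto
  also have "real (card S - card (S \<inter> {i. AA i = {}})) = real (card S) - real (card (S \<inter> {i. AA i = {}}))"
    using fS by (intro of_nat_diff card_mono) auto
  finally show ?thesis using s0 unfolding S_def by simp
qed

lemma card_starts: "(M + 1) * card (SS M \<inter> {i. AA i = {}}) \<le> card (SS M)"
proof -
  define S where "S = SS M"
  define R where "R = S \<inter> {i. AA i = {}}"
  have Sn: "S \<subseteq> {..<n}" unfolding S_def SS_def by auto
  have fS: "finite S" using Sn finite_subset by auto
  have fR: "finite R" unfolding R_def using fS by simp
  have aat: "aa t = t" if "AA t = {}" for t by (rule aa_eq) (use that in auto)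
  have sub: "{t..<bb t} \<subseteq> S" if t: "t \<in> R" for t
  proof
    fix j assume j: "j \<in> {t..<bb t}"
    have tn: "t < n" "AA t = {}" "M < bb t - aa t" using t unfolding R_def S_def SS_def by auto
    have "aa j = t"
    proof (rule aa_eq)
      show "t \<le> j" "AA t = {}" using j tn by auto
      fix k assume "t < k" "k \<le> j"
      then show "AA k \<noteq> {}" using bb_props(4)[OF tn(1), of k] j by simp
    qed
    moreover have "bb j = bb t"
    proof (rule bb_eq)
      show "j < bb t" "bb t \<le> n" "AA (bb t) = {}" using j bb_props[OF tn(1)] by auto
      fix k assume "j < k" "k < bb t"
      then show "AA k \<noteq> {}" using bb_props(4)[OF tn(1), of k] j by simp
    qed
    moreover have "j < n" using j bb_props(2)[OF tn(1)] by simp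
    ultimately show "j \<in> S" using tn aat[OF tn(2)] unfolding S_def SS_def by simp
  qed
  have disj: "{t..<bb t} \<inter> {t'..<bb t'} = {}" if "t \<in> R" "t' \<in> R" "t \<noteq> t'" for t t'
  proof -
    have key: "bb a \<le> b" if "a \<in> R" "b \<in> R" "a < b" for a b
    proof (rule ccontr)
      assume "\<not> bb a \<le> b"
      then show False using bb_props(4)[of a b] that unfolding R_def S_def SS_def by auto
    qed
    show ?thesis
    proof (cases "t < t'")
      case True then show ?thesis using key[OF that(1,2)] by auto
    next
      case False then have "t' < t" using that(3) by simp
      then show ?thesis using key[OF that(2,1)] by auto
    qed
  qed
  have "card (\<Union>t\<in>R. {t..<bb t}) = (\<Sum>t\<in>R. card {t..<bb t})"
    using fR disj by (intro card_UN_disjoint) auto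
  moreover have "(\<Sum>t\<in>R. card {t..<bb t}) \<ge> (\<Sum>t\<in>R. M + 1)"
  proof (rule sum_mono)
    fix t assume "t \<in> R"
    then have "M < bb t - aa t" "AA t = {}" unfolding R_def S_def SS_def by auto
    then show "M + 1 \<le> card {t..<bb t}" using aat by simp
  qed
  moreover have "card (\<Union>t\<in>R. {t..<bb t}) \<le> card S"
    using sub fS by (intro card_mono) auto
  ultimately show ?thesis unfolding R_def S_def by (simp add: mult.commute)
qed

end

definition Bd :: "nat \<Rightarrow> nat set \<Rightarrow> nat set" where
  "Bd m S = {i. i \<le> m \<and> (i \<in> S) \<noteq> (0 < i \<and> i - 1 \<in> S)}"

lemma Bd_inj:
  assumes "S \<subseteq> {..<m}" "S' \<subseteq> {..<m}" "Bd m S = Bd m S'"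
  shows "S = S'"
proof -
  have "i \<in> S \<longleftrightarrow> i \<in> S'" for i
  proof (induction i)
    case 0
    have "0 \<in> Bd m S \<longleftrightarrow> 0 \<in> Bd m S'" using assms(3) by simp
    then show ?case using assms(1,2) unfolding Bd_def by auto
  next
    case (Suc i)
    show ?case
    proof (cases "Suc i \<le> m")
      case True
      have "Suc i \<in> Bd m S \<longleftrightarrow> Suc i \<in> Bd m S'" using assms(3) by simp
      then show ?thesis using True Suc unfolding Bd_def by auto
    next
      case False then show ?thesis using assms(1,2) by auto
    qed
  qed
  then show ?thesis by auto
qed

context expl begin

lemma card_Bd: "card (Bd n (SS M)) \<le> 2 * card (SS M \<inter> {i. AA i = {}})"
proof -
  define S where "S = SS M"
  define R where "R = S \<inter> {i. AA i = {}}"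
  have Sn: "S \<subseteq> {..<n}" unfolding S_def SS_def by auto
  have fR: "finite R" unfolding R_def using Sn finite_subset by auto
  have aat: "aa t = t" if "AA t = {}" for t by (rule aa_eq) (use that in auto)
  have "Bd n S \<subseteq> R \<union> bb ` R"
  proof
    fix i assume i: "i \<in> Bd n S"
    show "i \<in> R \<union> bb ` R"
    proof (cases "i \<in> S")
      case True
      then have np: "\<not> (0 < i \<and> i - 1 \<in> S)" using i unfolding Bd_def by auto
      have "AA i = {}"
      proof (rule ccontr)
        assume a: "AA i \<noteq> {}"
        then have "0 < i" using AA0 by (cases i) auto
        moreover have "i < n" using True Sn by auto
        ultimately show False using SS_step[of i M] a np True unfolding S_def by auto
      qed
      then show ?thesis using True unfolding R_def by auto
    next
      case False
      then have p: "0 < i" "i - 1 \<in> S" "i \<le> n" using i unfolding Bd_def by auto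
      have j: "i - 1 < n" using p Sn by auto
      have Ai: "AA i = {}"
      proof (cases "i = n")
        case True then show ?thesis using AA_n by simp
      next
        case False
        then have "i < n" using p by simp
        then show ?thesis using SS_step[of i M] p \<open>i \<notin> S\<close> unfolding S_def by auto
      qed
      have bi: "bb (i - 1) = i"
        by (rule bb_eq) (use p Ai in auto)
      define t where "t = aa (i - 1)"
      have tT: "AA t = {}" unfolding t_def by (rule aa_props(2))
      have ti: "t < i" using aa_props(1)[of "i - 1"] p unfolding t_def by simp
      have bt: "bb t = i"
      proof (rule bb_eq)
        show "t < i" "i \<le> n" "AA i = {}" using ti p Ai by auto
        fix k assume "t < k" "k < i"
        then show "AA k \<noteq> {}" using aa_props(3)[of "i - 1" k] unfolding t_def by simp
      qed
      have "t \<in> S" using p(2) ti p(3) bt bi aat[OF tT] unfolding S_def SS_def t_def by auto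
      then have "t \<in> R" using tT unfolding R_def by simp
      then show ?thesis using bt by force
    qed
  qed
  then have "card (Bd n S) \<le> card (R \<union> bb ` R)"
    using fR by (intro card_mono) auto
  also have "\<dots> \<le> card R + card (bb ` R)" by (rule card_Un_le)
  also have "\<dots> \<le> 2 * card R" using card_image_le[OF fR, of bb] by simp
  finally show ?thesis unfolding R_def S_def .
qed

end


lemma (in expl) witness:
  assumes n: "0 < n" and big: "\<rho> * real n \<le> real (card (S_big n M E))"
  shows "SS M \<subseteq> {..<n} \<and> \<rho> * real n \<le> real (card (SS M)) \<and>
         (M + 1) * card (Bd n (SS M)) \<le> 2 * card (SS M) \<and>
         real (card (SS M)) * real M \<le> real (M + 1) * (\<Sum>j\<in>SS M. real (XX E (s0 n) j))"
proof -
  define r where "r = card (SS M \<inter> {i. AA i = {}})"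
  have 1: "SS M \<subseteq> {..<n}" unfolding SS_def by auto
  have 2: "\<rho> * real n \<le> real (card (SS M))" using big card_S_big[of M] by linarith
  have cs: "(M + 1) * r \<le> card (SS M)" using card_starts[of M] unfolding r_def .
  have 3: "(M + 1) * card (Bd n (SS M)) \<le> 2 * card (SS M)"
  proof -
    have "(M + 1) * card (Bd n (SS M)) \<le> (M + 1) * (2 * r)"
      using card_Bd[of M] unfolding r_def by (intro mult_left_mono) auto
    also have "\<dots> = 2 * ((M + 1) * r)" by simp
    also have "\<dots> \<le> 2 * card (SS M)" using cs by simp
    finally show ?thesis .
  qed
  have sx: "(\<Sum>j\<in>SS M. real (XX E (s0 n) j)) = real (card (SS M)) - real r"
    using sum_X[OF n, of M] unfolding X_def r_def .
  have csr: "real (M + 1) * real r \<le> real (card (SS M))" using cs by (metis of_nat_le_iff of_nat_mult)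
  have 4: "real (card (SS M)) * real M \<le> real (M + 1) * (\<Sum>j\<in>SS M. real (XX E (s0 n) j))"
    unfolding sx using csr by (simp add: algebra_simps)
  show ?thesis using 1 2 3 4 by blast
qed

lemma one_plus_pow_le_exp:
  fixes x :: real assumes "0 \<le> x" "0 < n"
  shows "(1 + x / n) ^ n \<le> exp x"
proof -
  have "1 + x / n \<le> exp (x / n)" by (rule exp_ge_add_one_self)
  then have "(1 + x / n) ^ n \<le> exp (x / n) ^ n"
    using assms by (intro power_mono) auto
  also have "\<dots> = exp x" using assms by (simp add: exp_of_nat_mult[symmetric])
  finally show ?thesis .
qed

lemma per_S:
  fixes lam :: real and n M :: nat and S :: "nat set"
  assumes lam: "0 < lam" "lam < 1" and n: "0 < n" and Sn: "S \<subseteq> {..<n}"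
  defines "p \<equiv> lam / real n"
  shows "EE p (all_edges n)
           (\<lambda>E. if real (card S) * real M \<le> real (M + 1) * (\<Sum>j\<in>S. real (XX E (s0 n) j)) then 1 else 0)
         \<le> exp (real (card S) * (ln lam * real M / real (M + 1) + (1 - lam)))"
proof -
  define L where "L = ln lam"
  have L: "L < 0" unfolding L_def using lam by simp
  have p: "0 \<le> p" "p \<le> 1" unfolding p_def using lam n by (auto simp: field_simps)
  have fS: "finite S" using Sn finite_subset by blast
  define g where "g j = (if j \<in> S then exp (- L) else 1)" for j
  define K where "K = exp (L * real M * real (card S) / real (M + 1))"
  have g1: "\<forall>j. 1 \<le> g j" unfolding g_def using L by auto
  have prodg: "(\<Prod>j<n. g j ^ XX E (s0 n) j) = exp (- L * (\<Sum>j\<in>S. real (XX E (s0 n) j)))" for E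
  proof -
    have "(\<Prod>j<n. g j ^ XX E (s0 n) j) = (\<Prod>j<n. if j \<in> S then exp (- L) ^ XX E (s0 n) j else 1)"
      by (intro prod.cong) (auto simp: g_def)
    also have "\<dots> = (\<Prod>j\<in>{..<n} \<inter> S. exp (- L) ^ XX E (s0 n) j)"
      by (simp add: prod.inter_restrict)
    also have "{..<n} \<inter> S = S" using Sn by auto
    also have "(\<Prod>j\<in>S. exp (- L) ^ XX E (s0 n) j) = (\<Prod>j\<in>S. exp (- L * real (XX E (s0 n) j)))"
      by (intro prod.cong) (auto simp: exp_of_nat_mult[symmetric] mult_ac)
    also have "\<dots> = exp (\<Sum>j\<in>S. - L * real (XX E (s0 n) j))"
      using fS by (simp add: exp_sum)
    finally show ?thesis by (simp add: sum_distrib_left)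
  qed
  have pw: "(if real (card S) * real M \<le> real (M + 1) * (\<Sum>j\<in>S. real (XX E (s0 n) j)) then 1 else 0)
            \<le> K * (\<Prod>j<n. g j ^ XX E (s0 n) j)" for E
  proof (cases "real (card S) * real M \<le> real (M + 1) * (\<Sum>j\<in>S. real (XX E (s0 n) j))")
    case True
    define sx where "sx = (\<Sum>j\<in>S. real (XX E (s0 n) j))"
    have M1: "0 < real (M + 1)" by simp
    have "real (card S) * real M / real (M + 1) \<le> sx" using True M1 unfolding sx_def by (simp add: field_simps)
    then have "- L * (real (card S) * real M / real (M + 1)) \<le> - L * sx" using L by (intro mult_left_mono) auto
    then have "0 \<le> L * real M * real (card S) / real (M + 1) + - L * sx" by (simp add: field_simps)
    then have one: "1 \<le> exp (L * real M * real (card S) / real (M + 1) + - L * sx)" by simp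
    have eq: "K * (\<Prod>j<n. g j ^ XX E (s0 n) j) = exp (L * real M * real (card S) / real (M + 1) + - L * sx)"
      unfolding K_def prodg sx_def by (simp add: exp_add[symmetric])
    have "(if real (card S) * real M \<le> real (M + 1) * (\<Sum>j\<in>S. real (XX E (s0 n) j)) then 1 else 0) = (1::real)"
      using True by simp
    then show ?thesis using one eq by linarith
  next
    case False
    then show ?thesis unfolding K_def prodg by simp
  qed
  have "EE p (all_edges n)
           (\<lambda>E. if real (card S) * real M \<le> real (M + 1) * (\<Sum>j\<in>S. real (XX E (s0 n) j)) then 1 else 0)
        \<le> EE p (all_edges n) (\<lambda>E. K * (\<Prod>j<n. g j ^ XX E (s0 n) j))"
    by (rule EE_mono[OF p]) (rule pw)
  also have "\<dots> = K * EE p (pairs (vs (s0 n))) (\<lambda>E. \<Prod>j<n. g j ^ XX E (s0 n) j)"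
    unfolding EE_def by (simp add: sum_distrib_left mult_ac all_edges_pairs vs_def s0_def)
  also have "\<dots> \<le> K * (\<Prod>j<n. (1 - p + p * g j) ^ n)"
  proof (rule mult_left_mono)
    show "0 \<le> K" unfolding K_def by simp
    show "EE p (pairs (vs (s0 n))) (\<lambda>E. \<Prod>j<n. g j ^ XX E (s0 n) j) \<le> (\<Prod>j<n. (1 - p + p * g j) ^ n)"
      by (rule core) (auto simp: good_def s0_def vs_def g1 p)
  qed
  finally have A: "EE p (all_edges n)
           (\<lambda>E. if real (card S) * real M \<le> real (M + 1) * (\<Sum>j\<in>S. real (XX E (s0 n) j)) then 1 else 0)
        \<le> K * (\<Prod>j<n. (1 - p + p * g j) ^ n)" .
  have "(\<Prod>j<n. (1 - p + p * g j) ^ n) = (\<Prod>j\<in>S. (1 + (1 - lam) / n) ^ n)"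
  proof -
    have e: "1 - p + p * exp (- L) = 1 + (1 - lam) / n"
      using lam n unfolding L_def p_def by (simp add: exp_minus field_simps)
    have "(\<Prod>j<n. (1 - p + p * g j) ^ n) = (\<Prod>j<n. if j \<in> S then (1 + (1 - lam) / n) ^ n else 1)"
      by (intro prod.cong) (auto simp: g_def e)
    also have "\<dots> = (\<Prod>j\<in>{..<n} \<inter> S. (1 + (1 - lam) / n) ^ n)"
      by (rule prod.inter_restrict[symmetric]) simp
    also have "{..<n} \<inter> S = S" using Sn by auto
    finally show ?thesis .
  qed
  also have "\<dots> = ((1 + (1 - lam) / n) ^ n) ^ card S" by simp
  also have "\<dots> \<le> exp (1 - lam) ^ card S"
    using one_plus_pow_le_exp[of "1 - lam" n] lam n by (intro power_mono) auto
  finally have B: "(\<Prod>j<n. (1 - p + p * g j) ^ n) \<le> exp (1 - lam) ^ card S" .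
  have C: "K * exp (1 - lam) ^ card S = exp (real (card S) * (L * real M / real (M + 1) + (1 - lam)))"
    unfolding K_def by (simp add: exp_of_nat_mult[symmetric] exp_add[symmetric] algebra_simps)
  have "K * (\<Prod>j<n. (1 - p + p * g j) ^ n) \<le> K * exp (1 - lam) ^ card S"
    using B by (intro mult_left_mono) (auto simp: K_def)
  then show ?thesis using A C unfolding L_def by linarith
qed


lemma sum_pow_card: "finite D \<Longrightarrow> (\<Sum>B\<in>Pow D. (d::real) ^ card B) = (1 + d) ^ card D"
proof -
  assume f: "finite D"
  have "(1 + d) ^ card D = (\<Prod>x\<in>D. d + 1)" by (simp add: add.commute)
  also have "\<dots> = (\<Sum>X\<in>Pow D. (\<Prod>x\<in>X. d) * (\<Prod>x\<in>D - X. 1))" by (rule prod_add[OF f])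
  also have "\<dots> = (\<Sum>B\<in>Pow D. d ^ card B)" by simp
  finally show ?thesis by simp
qed

lemma Bd_sub: "Bd m S \<subseteq> {..m}" unfolding Bd_def by auto

lemma sum_Bd:
  fixes d :: real
  assumes "0 \<le> d" "\<SS> \<subseteq> Pow {..<m}"
  shows "(\<Sum>S\<in>\<SS>. d ^ card (Bd m S)) \<le> (1 + d) ^ Suc m"
proof -
  have inj: "inj_on (Bd m) \<SS>"
  proof (rule inj_onI)
    fix x y assume "x \<in> \<SS>" "y \<in> \<SS>" "Bd m x = Bd m y"
    then show "x = y" using Bd_inj[of x m y] assms(2) by blast
  qed
  have f\<SS>: "finite \<SS>" using assms(2) finite_subset by (metis finite_Pow_iff finite_lessThan)
  have "(\<Sum>S\<in>\<SS>. d ^ card (Bd m S)) = (\<Sum>B\<in>Bd m ` \<SS>. d ^ card B)"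
    by (simp add: sum.reindex[OF inj])
  also have "\<dots> \<le> (\<Sum>B\<in>Pow {..m}. d ^ card B)"
  proof (rule sum_mono2)
    show "finite (Pow {..m})" by simp
    show "Bd m ` \<SS> \<subseteq> Pow {..m}" using Bd_sub by auto
    show "0 \<le> d ^ card b" for b using assms(1) by simp
  qed
  also have "\<dots> = (1 + d) ^ Suc m" by (simp add: sum_pow_card)
  finally show ?thesis .
qed

lemma bound_n:
  fixes lam \<rho> d :: real and n M :: nat
  assumes lam: "0 < lam" "lam < 1" and n: "0 < n" and rho: "0 < \<rho>"
    and d: "0 < d" "d \<le> 1"
    and c0: "c0 = - (ln lam + 1 - lam)"
    and M: "- (ln lam + 2 * ln d) \<le> c0 / 2 * real (M + 1)"
  shows "measure_pmf.prob (gnp n (lam / real n)) {E. real (card (S_big n M E)) \<ge> \<rho> * real n}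
         \<le> (1 + d) ^ Suc n * exp (- \<rho> * real n * c0 / 2)"
proof -
  define p where "p = lam / real n"
  define D where "D = all_edges n"
  define A where "A = {E. real (card (S_big n M E)) \<ge> \<rho> * real n}"
  have p: "0 < p" "p < 1" unfolding p_def using lam n by (auto simp: field_simps)
  define \<SS> where "\<SS> = {S. S \<subseteq> {..<n} \<and> \<rho> * real n \<le> real (card S) \<and> (M + 1) * card (Bd n S) \<le> 2 * card S}"
  have SSsub: "\<SS> \<subseteq> Pow {..<n}" unfolding \<SS>_def by auto
  have fSS: "finite \<SS>" using SSsub finite_subset by (metis finite_Pow_iff finite_lessThan)
  define ind where "ind S E = (if real (card S) * real M \<le> real (M + 1) * (\<Sum>j\<in>S. real (XX E (s0 n) j)) then 1 else (0::real))" for S E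
  have fD: "finite D" unfolding D_def all_edges_pairs by (simp add: finite_pairs)
  have wt0: "0 \<le> wt p D E" for E using p by (simp add: wt_nonneg)
  have "measure_pmf.prob (gnp n p) A = (\<Sum>E\<in>Pow D \<inter> A. wt p D E)"
    unfolding D_def by (rule gnp_prob[OF p])
  also have "\<dots> = (\<Sum>E\<in>Pow D. if E \<in> A then wt p D E else 0)"
    using fD by (simp add: sum.inter_restrict)
  also have "\<dots> \<le> (\<Sum>E\<in>Pow D. wt p D E * (\<Sum>S\<in>\<SS>. ind S E))"
  proof (rule sum_mono)
    fix E assume E: "E \<in> Pow D"
    show "(if E \<in> A then wt p D E else 0) \<le> wt p D E * (\<Sum>S\<in>\<SS>. ind S E)"
    proof (cases "E \<in> A")
      case True
      interpret expl n E by unfold_locales (use E in \<open>simp add: D_def\<close>)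
      have w: "SS M \<subseteq> {..<n} \<and> \<rho> * real n \<le> real (card (SS M)) \<and>
         (M + 1) * card (Bd n (SS M)) \<le> 2 * card (SS M) \<and>
         real (card (SS M)) * real M \<le> real (M + 1) * (\<Sum>j\<in>SS M. real (XX E (s0 n) j))"
        by (rule witness[OF n]) (use True in \<open>simp add: A_def\<close>)
      then have mem: "SS M \<in> \<SS>" unfolding \<SS>_def by auto
      have i1: "ind (SS M) E = 1" using w unfolding ind_def by simp
      have "1 \<le> (\<Sum>S\<in>\<SS>. ind S E)"
        using member_le_sum[OF mem, of "\<lambda>S. ind S E"] fSS i1 by (simp add: ind_def)
      then have "wt p D E * 1 \<le> wt p D E * (\<Sum>S\<in>\<SS>. ind S E)" using wt0 by (intro mult_left_mono) auto
      then show ?thesis using True by simp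
    next
      case False
      have "0 \<le> (\<Sum>S\<in>\<SS>. ind S E)" by (intro sum_nonneg) (simp add: ind_def)
      then show ?thesis using False wt0 by simp
    qed
  qed
  also have "\<dots> = (\<Sum>S\<in>\<SS>. EE p D (ind S))"
    unfolding EE_def by (simp add: sum_distrib_left sum.swap[of _ "Pow D"])
  also have "\<dots> \<le> (\<Sum>S\<in>\<SS>. exp (real (card S) * (ln lam * real M / real (M + 1) + (1 - lam))))"
  proof (rule sum_mono)
    fix S assume "S \<in> \<SS>"
    then have "S \<subseteq> {..<n}" unfolding \<SS>_def by auto
    then show "EE p D (ind S) \<le> exp (real (card S) * (ln lam * real M / real (M + 1) + (1 - lam)))"
      using per_S[OF lam n, of S M] unfolding p_def D_def ind_def by simp
  qed
  also have "\<dots> \<le> (\<Sum>S\<in>\<SS>. d ^ card (Bd n S) * exp (- \<rho> * real n * c0 / 2))"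
  proof (rule sum_mono)
    fix S assume S: "S \<in> \<SS>"
    define s where "s = real (card S)"
    define b where "b = real (card (Bd n S))"
    define L where "L = ln lam"
    have M1: "0 < real (M + 1)" by simp
    have "(M + 1) * card (Bd n S) \<le> 2 * card S" using S unfolding \<SS>_def by simp
    then have "real ((M + 1) * card (Bd n S)) \<le> real (2 * card S)" by (simp only: of_nat_le_iff)
    then have bs: "real (M + 1) * b \<le> 2 * s" unfolding s_def b_def by (simp add: algebra_simps)
    have rs: "\<rho> * real n \<le> s" using S unfolding \<SS>_def s_def by auto
    have ld: "ln d \<le> 0" using d by simp
    have s0: "0 \<le> s" unfolding s_def by simp
    have c0p: "0 < c0"
    proof -
      have "ln lam \<le> lam - 1" using lam by (intro ln_le_minus_one) simp
      moreover have "ln lam \<noteq> lam - 1" using ln_eq_minus_one[of lam] lam by auto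
      ultimately have "ln lam < lam - 1" by simp
      then show ?thesis using c0 by simp
    qed
    have "L * real M / real (M + 1) + L / real (M + 1) = (L * real M + L) / real (M + 1)"
      by (simp add: add_divide_distrib)
    also have "L * real M + L = L * real (M + 1)" by (simp add: algebra_simps)
    also have "L * real (M + 1) / real (M + 1) = L" using M1 by simp
    finally have "L * real M / real (M + 1) + L / real (M + 1) = L" .
    then have "L * real M / real (M + 1) + (1 - lam) = - c0 - L / real (M + 1)"
      using c0 unfolding L_def by linarith
    then have e1: "s * (L * real M / real (M + 1) + (1 - lam)) = s * (- c0 - L / real (M + 1))"
      by simp
    have key: "- c0 - L / real (M + 1) \<le> 2 * ln d / real (M + 1) - c0 / 2"
    proof -
      have "- (L + 2 * ln d) \<le> c0 / 2 * real (M + 1)" using M unfolding L_def .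
      then have "- (L + 2 * ln d) / real (M + 1) \<le> c0 / 2"
        using M1 by (subst divide_le_eq) auto
      moreover have "(L + 2 * ln d) / real (M + 1) = L / real (M + 1) + 2 * ln d / real (M + 1)"
        by (rule add_divide_distrib)
      moreover have "- (L + 2 * ln d) / real (M + 1) = - ((L + 2 * ln d) / real (M + 1))"
        by (rule minus_divide_left[symmetric])
      ultimately show ?thesis by linarith
    qed
    have "s * (- c0 - L / real (M + 1)) \<le> s * (2 * ln d / real (M + 1) - c0 / 2)"
      using key s0 by (intro mult_left_mono) auto
    also have "\<dots> = (2 * s / real (M + 1)) * ln d - s * c0 / 2" by (simp add: field_simps)
    also have "\<dots> \<le> b * ln d - s * c0 / 2"
    proof -
      have "b \<le> 2 * s / real (M + 1)" using bs M1 by (simp add: field_simps)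
      then have "(2 * s / real (M + 1)) * ln d \<le> b * ln d" using ld by (intro mult_right_mono_neg) auto
      then show ?thesis by simp
    qed
    also have "\<dots> \<le> b * ln d - \<rho> * real n * c0 / 2"
      using rs c0p by (simp add: divide_right_mono mult_right_mono)
    finally have ex: "s * (L * real M / real (M + 1) + (1 - lam)) \<le> b * ln d - \<rho> * real n * c0 / 2"
      using e1 by linarith
    have "exp (s * (L * real M / real (M + 1) + (1 - lam))) \<le> exp (b * ln d - \<rho> * real n * c0 / 2)"
      using ex by simp
    also have "\<dots> = d ^ card (Bd n S) * exp (- \<rho> * real n * c0 / 2)"
    proof -
      have eb: "exp (b * ln d) = d ^ card (Bd n S)" unfolding b_def using d by (simp add: exp_of_nat_mult)
      have "exp (b * ln d - \<rho> * real n * c0 / 2) = exp (b * ln d) * exp (- (\<rho> * real n * c0 / 2))"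
        using exp_add[of "b * ln d" "- (\<rho> * real n * c0 / 2)"] by simp
      then show ?thesis using eb by simp
    qed
    finally show "exp (real (card S) * (ln lam * real M / real (M + 1) + (1 - lam)))
                  \<le> d ^ card (Bd n S) * exp (- \<rho> * real n * c0 / 2)" unfolding s_def L_def .
  qed
  also have "\<dots> = (\<Sum>S\<in>\<SS>. d ^ card (Bd n S)) * exp (- \<rho> * real n * c0 / 2)"
    by (simp add: sum_distrib_right)
  also have "\<dots> \<le> (1 + d) ^ Suc n * exp (- \<rho> * real n * c0 / 2)"
    using sum_Bd[OF _ SSsub, of d] d by (intro mult_right_mono) auto
  finally show ?thesis unfolding A_def p_def .
qed


theorem mainTheorem3:
  fixes lam :: real
  assumes "0 < lam" and "lam < 1"
  shows "\<exists>c>0. \<forall>\<rho>>0. \<exists>M0::nat. \<forall>M\<ge>M0. \<exists>C::real. \<forall>n::nat.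
           measure_pmf.prob (gnp n (lam / real n))
             {E. real (card (S_big n M E)) \<ge> \<rho> * real n}
           \<le> C * exp (- c * \<rho> * real n)"
proof -
  define c0 where "c0 = - (ln lam + 1 - lam)"
  have c0p: "0 < c0"
  proof -
    have "ln lam \<le> lam - 1" using assms by (intro ln_le_minus_one) simp
    moreover have "ln lam \<noteq> lam - 1" using ln_eq_minus_one[of lam] assms by auto
    ultimately have "ln lam < lam - 1" by simp
    then show ?thesis unfolding c0_def by simp
  qed
  have "\<forall>\<rho>>0. \<exists>M0::nat. \<forall>M\<ge>M0. \<exists>C::real. \<forall>n::nat.
           measure_pmf.prob (gnp n (lam / real n))
             {E. real (card (S_big n M E)) \<ge> \<rho> * real n}
           \<le> C * exp (- (c0 / 4) * \<rho> * real n)"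
  proof (intro allI impI)
    fix \<rho> :: real assume rho: "0 < \<rho>"
    define d where "d = min 1 (\<rho> * c0 / 4)"
    have d: "0 < d" "d \<le> 1" "d \<le> \<rho> * c0 / 4" unfolding d_def using rho c0p by auto
    define M0 where "M0 = nat \<lceil>- 2 * (ln lam + 2 * ln d) / c0\<rceil>"
    show "\<exists>M0::nat. \<forall>M\<ge>M0. \<exists>C::real. \<forall>n::nat.
           measure_pmf.prob (gnp n (lam / real n))
             {E. real (card (S_big n M E)) \<ge> \<rho> * real n}
           \<le> C * exp (- (c0 / 4) * \<rho> * real n)"
    proof (intro exI allI impI)
      fix M :: nat and n :: nat assume M: "M0 \<le> M"
      have Mc: "- (ln lam + 2 * ln d) \<le> c0 / 2 * real (M + 1)"
      proof -
        have "- 2 * (ln lam + 2 * ln d) / c0 \<le> real M0" unfolding M0_def by (rule real_nat_ceiling_ge)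
        also have "\<dots> \<le> real M" using M by simp
        finally have "- 2 * (ln lam + 2 * ln d) \<le> real M * c0" by (simp only: pos_divide_le_eq[OF c0p])
        then have "- (ln lam + 2 * ln d) \<le> c0 / 2 * real M" by (simp add: algebra_simps)
        then show ?thesis using c0p by (simp add: algebra_simps)
      qed
      show "measure_pmf.prob (gnp n (lam / real n)) {E. real (card (S_big n M E)) \<ge> \<rho> * real n}
           \<le> exp 1 * exp (- (c0 / 4) * \<rho> * real n)"
      proof (cases "n = 0")
        case True
        have "measure_pmf.prob (gnp n (lam / real n)) {E. real (card (S_big n M E)) \<ge> \<rho> * real n} \<le> 1"
          by (rule measure_pmf.prob_le_1)
        also have "(1::real) \<le> exp 1" by simp
        finally show ?thesis using True by simp
      next
        case False
        then have n: "0 < n" by simp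
        have "measure_pmf.prob (gnp n (lam / real n)) {E. real (card (S_big n M E)) \<ge> \<rho> * real n}
              \<le> (1 + d) ^ Suc n * exp (- \<rho> * real n * c0 / 2)"
          by (rule bound_n[OF assms n rho d(1,2) c0_def Mc])
        also have "\<dots> \<le> exp d ^ Suc n * exp (- \<rho> * real n * c0 / 2)"
        proof (intro mult_right_mono power_mono)
          show "1 + d \<le> exp d" using exp_ge_add_one_self[of d] by (simp add: add.commute)
        qed (use d in auto)
        also have "exp d ^ Suc n = exp (real (Suc n) * d)" by (rule exp_of_nat_mult[symmetric])
        also have "exp (real (Suc n) * d) * exp (- \<rho> * real n * c0 / 2)
                   = exp (real (Suc n) * d - \<rho> * real n * c0 / 2)"
          by (simp add: exp_add[symmetric])
        also have "\<dots> \<le> exp (1 + (- (c0 / 4) * \<rho> * real n))"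
        proof -
          have "real (Suc n) * d = real n * d + d" by (simp add: algebra_simps)
          also have "\<dots> \<le> real n * (\<rho> * c0 / 4) + 1" using d by (intro add_mono mult_left_mono) auto
          finally show ?thesis by (simp add: algebra_simps)
        qed
        also have "\<dots> = exp 1 * exp (- (c0 / 4) * \<rho> * real n)" by (rule exp_add)
        finally show ?thesis .
      qed
    qed
  qed
  then show ?thesis using c0p by (intro exI[of _ "c0 / 4"]) auto
qed


end
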